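(* Let $d\le p$ be positive integers, let $\mathcal{U}\subset\mathbb{R}^p$ be a nonempty closed convex cone, let $G$ be a real $d\times p$ matrix with $\{Gu:u\in\mathcal{U}\}=\mathbb{R}^d$, and let $\kappa\in\mathbb{R}^p$. Let $\mathcal{U}_1=\{u\in\mathcal{U}:|Gu|=1\}$ and $\mathcal{H}(q)=\sup_{u\in\mathcal{U}_1}\{-Gu\cdot q-\kappa\cdot u\}$, $q\in\mathbb{R}^d$. Suppose that (a) $\{u\in\mathcal{U}:Gu=0\text{ and }\kappa\cdot u\le0\}=\{0\}$, and (b) there exists a unit vector $u_1\in\mathbb{R}^p$ such that $\inf_{u\in\mathcal{U}_1}u_1\cdot u>0$. Then $\inf_{q\in\mathbb{R}^d}\mathcal{H}(q)<0$.
   Context: $|\cdot|$ denotes the Euclidean norm. *)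

theory Defs
  imports "HOL-Analysis.Analysis"
begin

definition U1 :: "(real^'p) set \<Rightarrow> real^'p^'d \<Rightarrow> (real^'p) set" where
  "U1 U G = {u \<in> U. norm (G *v u) = 1}"

definition Ham :: "(real^'p) set \<Rightarrow> real^'p^'d \<Rightarrow> real^'p \<Rightarrow> real^'d \<Rightarrow> ereal" where
  "Ham U G \<kappa> q = (SUP u\<in>U1 U G. ereal (- ((G *v u) \<bullet> q) - \<kappa> \<bullet> u))"

end

theory Submission
  imports Defs
begin

lemma mv_scale: "(G::real^'p^'d) *v (c *\<^sub>R x) = c *\<^sub>R (G *v x)"
  by (rule matrix_vector_mult_scaleR)

lemma mv_add: "(G::real^'p^'d) *v (x + y) = G *v x + G *v y"
  by (simp add: matrix_vector_right_distrib)

theorem theorem2p2: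
  fixes U :: "(real^'p) set" and G :: "real^'p^'d" and \<kappa> :: "real^'p"
  assumes "CARD('d) \<le> CARD('p)"
    and "U \<noteq> {}" and "closed U" and "convex U" and "cone U"
    and "(\<lambda>u. G *v u) ` U = UNIV"
    and "{u \<in> U. G *v u = 0 \<and> \<kappa> \<bullet> u \<le> 0} = {0}"
    and "\<exists>u1::real^'p. norm u1 = 1 \<and> (INF u\<in>U1 U G. ereal (u1 \<bullet> u)) > 0"
  shows "(INF q. Ham U G \<kappa> q) < 0"
proof -
  note surj = assms(6)
  have scl: "c *\<^sub>R u \<in> U" if "u \<in> U" "c \<ge> 0" for u c
    using assms(5) that unfolding cone_def by blast
  have addU: "x + y \<in> U" if "x \<in> U" "y \<in> U" for x y
  proof -
    have "(1/2) *\<^sub>R x + (1/2) *\<^sub>R y \<in> U"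
      using assms(4) that by (simp add: convexD)
    from scl[OF this, of 2] show ?thesis by (simp add: scaleR_right_distrib)
  qed
  have kpos: "\<kappa> \<bullet> u > 0" if "u \<in> U" "u \<noteq> 0" "G *v u = 0" for u
    using assms(7) that by (metis (mono_tags, lifting) mem_Collect_eq not_le singletonD)
  obtain u1 :: "real^'p" where u1: "0 < (INF u\<in>U1 U G. ereal (u1 \<bullet> u))"
    using assms(8) by blast
  have posU1: "u1 \<bullet> v > 0" if "v \<in> U1 U G" for v
  proof -
    have "(INF u\<in>U1 U G. ereal (u1 \<bullet> u)) \<le> ereal (u1 \<bullet> v)" using that by (rule INF_lower)
    with u1 have "0 < ereal (u1 \<bullet> v)" by (rule less_le_trans)
    then show ?thesis by simp
  qed
  have pos: "u1 \<bullet> u > 0" if "u \<in> U" "G *v u \<noteq> 0" for u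
  proof -
    let ?v = "(1 / norm (G *v u)) *\<^sub>R u"
    have "?v \<in> U1 U G" unfolding U1_def using that scl[OF that(1), of "1 / norm (G *v u)"]
      by (simp add: mv_scale)
    from posU1[OF this] that show ?thesis by (simp add: field_simps)
  qed
  obtain v0 where v0: "v0 \<in> U1 U G"
  proof -
    obtain z :: "real^'d" where z: "norm z = 1" using vector_choose_size[of 1] by auto
    then obtain v where "v \<in> U" "G *v v = z" using surj by (metis UNIV_I imageE)
    then show ?thesis using that z unfolding U1_def by auto
  qed
  have nonneg: "u1 \<bullet> u \<ge> 0" if "u \<in> U" for u
  proof (cases "G *v u = 0")
    case False then show ?thesis using pos that by fastforce
  next
    case True
    show ?thesis
    proof (rule ccontr)
      assume neg: "\<not> ?thesis"
      define n where "n = (\<bar>u1 \<bullet> v0\<bar> + 1) / (- (u1 \<bullet> u))"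
      have n0: "n \<ge> 0" using neg unfolding n_def by (simp add: divide_nonneg_neg)
      have "v0 + n *\<^sub>R u \<in> U1 U G" using v0 addU scl[OF that n0] True
        unfolding U1_def by (simp add: mv_add mv_scale)
      from posU1[OF this] have "u1 \<bullet> v0 + n * (u1 \<bullet> u) > 0" by (simp add: inner_add_right)
      moreover have "n * (u1 \<bullet> u) = - (\<bar>u1 \<bullet> v0\<bar> + 1)" using neg unfolding n_def by simp
      ultimately show False by linarith
    qed
  qed
  define W where "W = {u \<in> U. norm u = 1}"
  have Wsub: "W \<subseteq> U" unfolding W_def by auto
  have cW: "compact W"
  proof -
    have "W = U \<inter> sphere 0 1" unfolding W_def by auto
    then show ?thesis using assms(3) by (simp add: closed_Int_compact)
  qed
  obtain e :: "real^'p" where e: "\<And>w. w \<in> W \<Longrightarrow> e \<bullet> w > 0"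
  proof -
    define W0 where "W0 = {u \<in> W. \<kappa> \<bullet> u \<le> 0}"
    have cW0: "compact W0"
    proof -
      have "W0 = W \<inter> {x. \<kappa> \<bullet> x \<le> 0}" unfolding W0_def by auto
      then show ?thesis using compact_Int_closed[OF cW closed_halfspace_le] by simp
    qed
    show ?thesis
    proof (cases "W0 = {}")
      case True
      show ?thesis
      proof (rule that[of "u1 + \<kappa>"])
        fix w assume w: "w \<in> W"
        then have "\<kappa> \<bullet> w > 0" using True unfolding W0_def by auto
        moreover have "u1 \<bullet> w \<ge> 0" using nonneg w Wsub by auto
        ultimately show "(u1 + \<kappa>) \<bullet> w > 0" by (simp add: inner_add_left)
      qed
    next
      case False
      have "continuous_on W0 (\<lambda>u. u1 \<bullet> u)" by (intro continuous_intros)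
      then obtain w0 where w0: "w0 \<in> W0" "\<And>y. y \<in> W0 \<Longrightarrow> u1 \<bullet> w0 \<le> u1 \<bullet> y"
        using continuous_attains_inf[OF cW0 False] by blast
      have w0U: "w0 \<in> U" "w0 \<noteq> 0" "\<kappa> \<bullet> w0 \<le> 0" using w0(1) unfolding W0_def W_def by auto
      then have "G *v w0 \<noteq> 0" using kpos by fastforce
      then have m: "u1 \<bullet> w0 > 0" using pos w0U by blast
      define t where "t = (u1 \<bullet> w0) / (norm \<kappa> + 1)"
      have nk: "norm \<kappa> + 1 > 0" by (metis norm_ge_zero add_nonneg_pos zero_less_one)
      have t0: "t > 0" using m nk unfolding t_def by (simp add: divide_pos_pos)
      have tk: "t * norm \<kappa> < u1 \<bullet> w0"
      proof -
        have "t * norm \<kappa> < t * (norm \<kappa> + 1)" using t0 by simp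
        also have "\<dots> = u1 \<bullet> w0" unfolding t_def using nk by simp
        finally show ?thesis .
      qed
      show ?thesis
      proof (rule that[of "u1 + t *\<^sub>R \<kappa>"])
        fix w assume w: "w \<in> W"
        have ew: "(u1 + t *\<^sub>R \<kappa>) \<bullet> w = u1 \<bullet> w + t * (\<kappa> \<bullet> w)" by (simp add: inner_add_left)
        show "(u1 + t *\<^sub>R \<kappa>) \<bullet> w > 0"
        proof (cases "w \<in> W0")
          case True
          have nw: "norm w = 1" using w unfolding W_def by auto
          have "\<bar>\<kappa> \<bullet> w\<bar> \<le> norm \<kappa> * norm w" by (rule Cauchy_Schwarz_ineq2)
          then have "\<kappa> \<bullet> w \<ge> - norm \<kappa>" using nw by simp
          then have "t * (\<kappa> \<bullet> w) \<ge> - (t * norm \<kappa>)" using t0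
            by (metis minus_mult_right mult_le_cancel_left_pos)
          then show ?thesis using ew w0(2)[OF True] tk by linarith
        next
          case False
          then have "\<kappa> \<bullet> w > 0" using w unfolding W0_def by auto
          moreover have "u1 \<bullet> w \<ge> 0" using nonneg w Wsub by auto
          ultimately show ?thesis using ew t0 by (simp add: add_nonneg_pos)
        qed
      qed
    qed
  qed
  have Wne: "W \<noteq> {}"
  proof -
    have v0U: "v0 \<in> U" and Gv0: "norm (G *v v0) = 1" using v0 unfolding U1_def by auto
    then have "v0 \<noteq> 0" by auto
    then have "(1 / norm v0) *\<^sub>R v0 \<in> W" unfolding W_def using scl[OF v0U, of "1 / norm v0"] by simp
    then show ?thesis by blast
  qed
  define B where "B = convex hull W"
  have BU: "B \<subseteq> U" unfolding B_def using Wsub assms(4) by (rule hull_minimal)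
  have Be: "B \<subseteq> {x. e \<bullet> x > 0}" unfolding B_def
    by (rule hull_minimal) (use e convex_halfspace_gt in auto)
  have WB: "W \<subseteq> B" unfolding B_def by (rule hull_subset)
  define L :: "real^'p \<Rightarrow> (real^'d) \<times> real" where "L = (\<lambda>u. (G *v u, \<kappa> \<bullet> u))"
  have linL: "linear L" unfolding linear_iff L_def
    by (auto simp: matrix_vector_mult_scaleR mv_add inner_add_right)
  define C where "C = L ` B"
  have cC: "compact C"
  proof -
    have "continuous_on B L" by (rule linear_continuous_on) (use linL linear_conv_bounded_linear in auto)
    moreover have "compact B" unfolding B_def using cW by (rule compact_convex_hull)
    ultimately show ?thesis unfolding C_def by (rule compact_continuous_image)
  qed
  have cvC: "convex C" unfolding C_def B_def by (rule convex_linear_image[OF linL convex_convex_hull])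
  have neC: "C \<noteq> {}" unfolding C_def using Wne WB by auto
  define T :: "((real^'d) \<times> real) set" where "T = {0} \<times> {..0}"
  have cvT: "convex T" unfolding T_def by (intro convex_Times convex_singleton) (simp add: convex_real_interval)
  have clT: "closed T" unfolding T_def by (intro closed_Times closed_singleton closed_atMost)
  have disj: "C \<inter> T = {}"
  proof (rule ccontr)
    assume "C \<inter> T \<noteq> {}"
    then obtain x where x: "x \<in> B" "G *v x = 0" "\<kappa> \<bullet> x \<le> 0" unfolding C_def T_def L_def by auto
    then have "x \<in> U" using BU by auto
    with x have "x = 0" using assms(7) by blast
    with x Be show False by auto
  qed
  obtain a b where sep1: "\<forall>x\<in>C. a \<bullet> x < b" and sep2: "\<forall>x\<in>T. a \<bullet> x > b"
    using separating_hyperplane_compact_closed[OF cvC cC neC cvT clT disj] by blast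
  obtain q s where a: "a = (q, s)" by (cases a)
  have "(0::(real^'d) \<times> real) \<in> T" unfolding T_def by (simp add: zero_prod_def)
  then have b0: "b < 0" using sep2 by force
  have hB: "q \<bullet> (G *v u) + s * (\<kappa> \<bullet> u) < b" if "u \<in> B" for u
    using sep1 that unfolding C_def L_def a by auto
  have hT: "s * t > b" if "t \<le> 0" for t
    using sep2 that unfolding T_def a by auto
  have sle: "s \<le> 0"
  proof (rule ccontr)
    assume "\<not> s \<le> 0"
    then have "s > 0" by simp
    then have "2 * b / s \<le> 0" using b0 by (simp add: divide_nonpos_pos)
    from hT[OF this] \<open>s > 0\<close> b0 show False by simp
  qed
  have sne: "s \<noteq> 0"
  proof
    assume s0: "s = 0"
    show False
    proof (cases "q = 0")
      case True
      obtain w where "w \<in> W" using Wne by blast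
      from hB[of w] this WB True s0 b0 show False by auto
    next
      case False
      obtain u where u: "u \<in> U" "G *v u = q" using surj by (metis UNIV_I imageE)
      then have "u \<noteq> 0" using False by auto
      then have wW: "(1 / norm u) *\<^sub>R u \<in> W" unfolding W_def using scl[OF u(1), of "1 / norm u"] by simp
      have "q \<bullet> (G *v ((1 / norm u) *\<^sub>R u)) = (1 / norm u) * (q \<bullet> q)"
        using u by (simp add: matrix_vector_mult_scaleR)
      moreover have "(1 / norm u) * (q \<bullet> q) > 0" using False \<open>u \<noteq> 0\<close> by simp
      ultimately show False using hB[of "(1 / norm u) *\<^sub>R u"] wW WB s0 b0 by auto
    qed
  qed
  have sneg: "s < 0" using sle sne by simp
  obtain K where K: "K > 0" "\<And>x. norm (G *v x) \<le> norm x * K"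
    using bounded_linear.pos_bounded[OF matrix_vector_mul_bounded_linear[of G]] by blast
  define q' where "q' = (1 / s) *\<^sub>R q"
  define c where "c = b / (s * K)"
  have c0: "c > 0" unfolding c_def using b0 sneg K(1) by (simp add: divide_neg_neg mult_neg_pos)
  have key: "- ((G *v u) \<bullet> q') - \<kappa> \<bullet> u \<le> - c" if "u \<in> U1 U G" for u
  proof -
    have u: "u \<in> U" "norm (G *v u) = 1" using that unfolding U1_def by auto
    then have nu: "u \<noteq> 0" by auto
    have lb: "1 \<le> norm u * K" using K(2)[of u] u by simp
    define r where "r = 1 / norm u"
    have r0: "r > 0" using nu unfolding r_def by simp
    have wW: "r *\<^sub>R u \<in> W" unfolding W_def r_def using scl[OF u(1), of "1 / norm u"] nu by simp
    from hB[of "r *\<^sub>R u"] wW WB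
    have "r * (q \<bullet> (G *v u) + s * (\<kappa> \<bullet> u)) < b"
      by (auto simp: matrix_vector_mult_scaleR algebra_simps)
    then have h1: "q \<bullet> (G *v u) + s * (\<kappa> \<bullet> u) < b * norm u"
      using nu unfolding r_def by (simp add: field_simps)
    have eq: "(G *v u) \<bullet> q' = (q \<bullet> (G *v u)) / s" unfolding q'_def by (simp add: inner_commute)
    have h2: "(q \<bullet> (G *v u)) / s + \<kappa> \<bullet> u > b * norm u / s"
    proof -
      have "(q \<bullet> (G *v u) + s * (\<kappa> \<bullet> u)) / s > (b * norm u) / s"
        using h1 sneg by (simp add: divide_strict_right_mono_neg)
      then show ?thesis using sne by (simp add: add_divide_distrib)
    qed
    have h3: "b * norm u / s \<ge> c"
    proof -
      have "b / s > 0" using b0 sneg by (simp add: divide_neg_neg)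
      have "c = (b / s) * (1 / K)" unfolding c_def by simp
      also have "\<dots> \<le> (b / s) * norm u"
        using \<open>b / s > 0\<close> lb K(1) by (intro mult_left_mono) (simp_all add: field_simps)
      finally show ?thesis by simp
    qed
    show ?thesis using eq h2 h3 by linarith
  qed
  have "Ham U G \<kappa> q' \<le> ereal (- c)" unfolding Ham_def
    by (rule SUP_least) (use key in simp)
  moreover have "(INF q. Ham U G \<kappa> q) \<le> Ham U G \<kappa> q'" by (rule INF_lower) simp
  ultimately have "(INF q. Ham U G \<kappa> q) \<le> ereal (- c)" by (rule order_trans[rotated])
  also have "ereal (- c) < 0" using c0 by simp
  finally show ?thesis .
qed

end
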